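(* $\mathbb{F}(V)^P=\mathbb{F}(a_0,\beta,\Delta)$.
   Context: Let $p>2$ be a prime, $q=p^n$, and $\mathbb{F}$ a field of characteristic $p$ containing $\mathbb{F}_q$. Let $\mathbb{F}(V)=\mathbb{F}(a_0,a_1,a_2)$. For $c\in\mathbb{F}_q$ let $\sigma_c$ act on $\mathbb{F}(a_0,a_1,a_2)$ by the field automorphism $a_2\mapsto a_2+2ca_1+c^2a_0$, $a_1\mapsto a_1+ca_0$, $a_0\mapsto a_0$, and let $P=\{\sigma_c:c\in\mathbb{F}_q\}$ (a group isomorphic to $(\mathbb{F}_q,+)$, the upper unitriangular matrices in $SL_2(\mathbb{F}_q)$). $\mathbb{F}(V)^P$ is the field of $P$-invariant rational functions. Define $\Delta=a_1^2-a_0a_2$ and $\beta=\prod_{c\in\mathbb{F}_q}(a_1+ca_0)$. *)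

theory Defs
  imports "HOL-Computational_Algebra.Computational_Algebra"
begin

text \<open>Polynomial ring F[a0,a1,a2] realised as 'a poly poly poly:
  innermost variable a0, middle variable a1, outermost variable a2.
  The rational function field F(V) = F(a0,a1,a2) is its fraction field.\<close>

type_synonym 'a mpoly3 = "'a poly poly poly"
type_synonym 'a ratfun3 = "'a mpoly3 fract"

definition cK :: "'a::field \<Rightarrow> 'a ratfun3" where
  "cK c = Fract [:[:[:c:]:]:] 1"

definition A0 :: "'a::field ratfun3" where "A0 = Fract [:[:[:0, 1:]:]:] 1"
definition A1 :: "'a::field ratfun3" where "A1 = Fract [:[:0, 1:]:] 1"
definition A2 :: "'a::field ratfun3" where "A2 = Fract [:0, 1:] 1"

definition eval3 :: "'a::field mpoly3 \<Rightarrow> 'a ratfun3 \<Rightarrow> 'a ratfun3 \<Rightarrow> 'a ratfun3 \<Rightarrow> 'a ratfun3" where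
  "eval3 f x0 x1 x2 =
     poly (map_poly (\<lambda>g. poly (map_poly (\<lambda>h. poly (map_poly cK h) x0) g) x1) f) x2"

definition sigma :: "'a::field \<Rightarrow> 'a ratfun3 \<Rightarrow> 'a ratfun3" where
  "sigma c r = (SOME s. \<exists>f g. g \<noteq> 0 \<and> r = Fract f g \<and>
      s = eval3 f A0 (A1 + cK c * A0) (A2 + cK (2 * c) * A1 + cK (c ^ 2) * A0)
        / eval3 g A0 (A1 + cK c * A0) (A2 + cK (2 * c) * A1 + cK (c ^ 2) * A0))"

definition Fq :: "nat \<Rightarrow> 'a::field set" where
  "Fq q = {c. c ^ q = c}"

definition Delta :: "'a::field ratfun3" where
  "Delta = A1 ^ 2 - A0 * A2"

definition beta :: "nat \<Rightarrow> 'a::field ratfun3" where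
  "beta q = (\<Prod>c\<in>Fq q. A1 + cK c * A0)"

definition invariant_field :: "nat \<Rightarrow> 'a::field ratfun3 set" where
  "invariant_field q = {r. \<forall>c\<in>Fq q. sigma c r = r}"

definition gen_field :: "'a::field ratfun3 \<Rightarrow> 'a ratfun3 \<Rightarrow> 'a ratfun3 \<Rightarrow> 'a ratfun3 set" where
  "gen_field x y z = {eval3 f x y z / eval3 g x y z | f g. eval3 g x y z \<noteq> 0}"

end

theory Submission
  imports Defs
begin



definition rhom :: "('a::comm_ring_1 \<Rightarrow> 'b::comm_ring_1) \<Rightarrow> bool" where
  "rhom h \<longleftrightarrow> (\<forall>x y. h (x + y) = h x + h y) \<and> (\<forall>x y. h (x * y) = h x * h y) \<and> h 1 = 1"

lemma rhom_add: "rhom h \<Longrightarrow> h (x + y) = h x + h y" by (simp add: rhom_def)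
lemma rhom_mult: "rhom h \<Longrightarrow> h (x * y) = h x * h y" by (simp add: rhom_def)
lemma rhom_1: "rhom h \<Longrightarrow> h 1 = 1" by (simp add: rhom_def)
lemma rhom_0: "rhom h \<Longrightarrow> h 0 = 0"
proof -
  assume "rhom h"
  then have "h (0 + 0) = h 0 + h 0" by (rule rhom_add)
  then show ?thesis by simp
qed
lemma rhom_uminus: "rhom h \<Longrightarrow> h (- x) = - h x"
proof -
  assume h: "rhom h"
  then have "h (x + - x) = h x + h (- x)" by (rule rhom_add)
  then show ?thesis using rhom_0[OF h] by (simp add: eq_neg_iff_add_eq_0 add.commute)
qed
lemma rhom_diff: "rhom h \<Longrightarrow> h (x - y) = h x - h y"
  using rhom_add[of h x "- y"] rhom_uminus[of h y] by simp
lemma rhom_power: "rhom h \<Longrightarrow> h (x ^ n) = h x ^ n"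
  by (induction n) (simp_all add: rhom_1 rhom_mult)
lemma rhom_of_nat: "rhom h \<Longrightarrow> h (of_nat n) = of_nat n"
  by (induction n) (simp_all add: rhom_0 rhom_1 rhom_add)
lemma rhom_numeral: "rhom h \<Longrightarrow> h (numeral n) = numeral n"
  using rhom_of_nat[of h "numeral n"] by simp
lemma rhom_sum: "rhom h \<Longrightarrow> h (sum f A) = sum (h \<circ> f) A"
  by (induction A rule: infinite_finite_induct) (simp_all add: rhom_0 rhom_add)
lemma rhom_prod: "rhom h \<Longrightarrow> h (prod f A) = prod (h \<circ> f) A"
  by (induction A rule: infinite_finite_induct) (simp_all add: rhom_1 rhom_mult)
lemma rhom_comp: "rhom h \<Longrightarrow> rhom g \<Longrightarrow> rhom (g \<circ> h)"
  by (simp add: rhom_def)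
lemma rhom_id: "rhom (\<lambda>x. x)" by (simp add: rhom_def)

lemma rhom_divide:
  fixes h :: "'a::field \<Rightarrow> 'b::field"
  assumes h: "rhom h" shows "h (x / y) = h x / h y"
proof (cases "y = 0")
  case True then show ?thesis by (simp add: rhom_0[OF h])
next
  case False
  have "h y * h (inverse y) = 1" using rhom_mult[OF h, of y "inverse y"] False rhom_1[OF h] by simp
  then have "h (inverse y) = inverse (h y)" by (metis inverse_unique)
  then show ?thesis by (simp add: divide_inverse rhom_mult[OF h])
qed

lemma map_poly_add_hom: "rhom h \<Longrightarrow> map_poly h (p + q) = map_poly h p + map_poly h q"
  by (intro poly_eqI) (simp add: coeff_map_poly rhom_0 rhom_add)

lemma map_poly_mult_hom: "rhom h \<Longrightarrow> map_poly h (p * q) = map_poly h p * map_poly h q"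
proof (induction p)
  case 0 then show ?case by simp
next
  case (pCons a p)
  then show ?case
    by (simp add: map_poly_add_hom map_poly_smult rhom_0 rhom_mult map_poly_pCons)
qed

lemma rhom_map_poly: "rhom h \<Longrightarrow> rhom (map_poly h)"
  unfolding rhom_def[of "map_poly h"]
  by (simp add: map_poly_add_hom map_poly_mult_hom rhom_1)

lemma rhom_poly: "rhom (\<lambda>p. poly p x)"
  by (simp add: rhom_def)

lemma rhom_poly_commute: "rhom h \<Longrightarrow> h (poly p x) = poly (map_poly h p) (h x)"
  by (induction p) (simp_all add: rhom_0 rhom_add rhom_mult map_poly_pCons)

definition evalG :: "('a::comm_ring_1 \<Rightarrow> 'b::comm_ring_1) \<Rightarrow> 'a poly poly poly \<Rightarrow> 'b \<Rightarrow> 'b \<Rightarrow> 'b \<Rightarrow> 'b" where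
  "evalG k f x0 x1 x2 =
     poly (map_poly (\<lambda>g. poly (map_poly (\<lambda>h. poly (map_poly k h) x0) g) x1) f) x2"

lemma eval3_evalG: "eval3 f x0 x1 x2 = evalG cK f x0 x1 x2"
  by (simp add: eval3_def evalG_def)

lemma rhom_evalG: assumes "rhom k" shows "rhom (\<lambda>f. evalG k f x0 x1 x2)"
proof -
  have r1: "rhom (\<lambda>h. poly (map_poly k h) x0)"
    using rhom_comp[OF rhom_map_poly[OF assms] rhom_poly] by (simp add: o_def)
  have r2: "rhom (\<lambda>g. poly (map_poly (\<lambda>h. poly (map_poly k h) x0) g) x1)"
    using rhom_comp[OF rhom_map_poly[OF r1] rhom_poly] by (simp add: o_def)
  show ?thesis
    using rhom_comp[OF rhom_map_poly[OF r2] rhom_poly] by (simp add: o_def evalG_def)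
qed

lemma map_map_hom: "rhom h \<Longrightarrow> rhom k \<Longrightarrow> map_poly h (map_poly k u) = map_poly (\<lambda>x. h (k x)) u"
  by (simp add: map_poly_map_poly rhom_0 o_def)

lemma evalG_commute:
  assumes k: "rhom k" and h: "rhom h"
  shows "h (evalG k f x0 x1 x2) = evalG (h \<circ> k) f (h x0) (h x1) (h x2)"
proof -
  have r1: "rhom (\<lambda>h. poly (map_poly k h) x0)"
    using rhom_comp[OF rhom_map_poly[OF k] rhom_poly] by (simp add: o_def)
  have r2: "rhom (\<lambda>g. poly (map_poly (\<lambda>h. poly (map_poly k h) x0) g) x1)"
    using rhom_comp[OF rhom_map_poly[OF r1] rhom_poly] by (simp add: o_def)
  have e1: "h (poly (map_poly k u) x0) = poly (map_poly (h \<circ> k) u) (h x0)" for u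
    by (simp add: rhom_poly_commute[OF h] map_poly_map_poly rhom_0 k h)
  have e2: "h (poly (map_poly (\<lambda>h. poly (map_poly k h) x0) g) x1)
       = poly (map_poly (\<lambda>u. poly (map_poly (h \<circ> k) u) (h x0)) g) (h x1)" for g
    using e1 by (simp add: rhom_poly_commute[OF h] map_poly_map_poly rhom_0 r1 h k o_def map_map_hom)
  show ?thesis
    unfolding evalG_def
    using e2 by (simp add: rhom_poly_commute[OF h] map_poly_map_poly rhom_0 r2 h k o_def map_map_hom)
qed




definition CC :: "'a::field \<Rightarrow> 'a mpoly3" where "CC a = [:[:[:a:]:]:]"
definition X0 :: "'a::field mpoly3" where "X0 = [:[:[:0,1:]:]:]"
definition X1 :: "'a::field mpoly3" where "X1 = [:[:0,1:]:]"
definition X2 :: "'a::field mpoly3" where "X2 = [:0,1:]"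

definition T :: "'a::field \<Rightarrow> 'a mpoly3 \<Rightarrow> 'a mpoly3" where
  "T c f = evalG CC f X0 (X1 + CC c * X0) (X2 + 2 * CC c * X1 + CC c ^ 2 * X0)"

lemma rhom_CC: "rhom CC"
  by (simp add: rhom_def CC_def pCons_one)

lemma rhom_pc: "rhom (\<lambda>a. [:a:])"
  by (simp add: rhom_def)

lemma evalG_C: "rhom k \<Longrightarrow> evalG k [:[:[:a:]:]:] x0 x1 x2 = k a"
  by (simp add: evalG_def map_poly_pCons rhom_0)
lemma evalG_CC: "rhom k \<Longrightarrow> evalG k (CC a) x0 x1 x2 = k a"
  by (simp add: CC_def evalG_C)
lemma evalG_X0: "rhom k \<Longrightarrow> evalG k X0 x0 x1 x2 = x0"
  by (simp add: evalG_def X0_def map_poly_pCons rhom_0 rhom_1)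
lemma evalG_X1: "rhom k \<Longrightarrow> evalG k X1 x0 x1 x2 = x1"
  by (simp add: evalG_def X1_def map_poly_pCons rhom_0 rhom_1)
lemma evalG_X2: "rhom k \<Longrightarrow> evalG k X2 x0 x1 x2 = x2"
  by (simp add: evalG_def X2_def map_poly_pCons rhom_0 rhom_1)

lemma poly_map_const_X: "poly (map_poly (\<lambda>a. [:a:]) h) [:0,1:] = (h :: 'a::comm_ring_1 poly)"
  by (induction h) (simp_all add: map_poly_pCons)

lemma evalG_id: "evalG CC f X0 X1 X2 = f"
proof -
  have i1: "poly (map_poly CC h) X0 = [:[:h:]:]" for h :: "'a poly"
  proof -
    have "[:[:h:]:] = [:[:poly (map_poly (\<lambda>a. [:a:]) h) [:0,1:]:]:]" by (simp add: poly_map_const_X)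
    also have "\<dots> = poly (map_poly (\<lambda>p. [:[:p:]:]) (map_poly (\<lambda>a. [:a:]) h)) [:[:[:0,1:]:]:]"
      by (subst rhom_poly_commute[of "\<lambda>p. [:[:p:]:]"]) (simp_all add: rhom_def pCons_one)
    also have "\<dots> = poly (map_poly CC h) X0"
      by (simp add: map_poly_map_poly o_def CC_def[abs_def] X0_def)
    finally show ?thesis by simp
  qed
  have i2: "poly (map_poly (\<lambda>h. poly (map_poly CC h) X0) g) X1 = [:g:]" for g :: "'a poly poly"
  proof -
    have "[:g:] = [:poly (map_poly (\<lambda>a. [:a:]) g) [:0,1:]:]" by (simp add: poly_map_const_X)
    also have "\<dots> = poly (map_poly (\<lambda>p. [:p:]) (map_poly (\<lambda>a. [:a:]) g)) [:[:0,1:]:]"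
      by (subst rhom_poly_commute[of "\<lambda>p. [:p:]"]) (simp_all add: rhom_def)
    also have "\<dots> = poly (map_poly (\<lambda>h. poly (map_poly CC h) X0) g) X1"
      by (simp add: map_poly_map_poly o_def i1 X1_def)
    finally show ?thesis by simp
  qed
  show ?thesis unfolding evalG_def i2 X2_def by (simp add: poly_map_const_X)
qed

lemma rhom_T: "rhom (T c)"
  unfolding T_def[abs_def] by (rule rhom_evalG[OF rhom_CC])

lemma T_CC: "T c (CC a) = CC a" by (simp add: T_def evalG_CC rhom_CC)
lemma T_X0: "T c X0 = X0" by (simp add: T_def evalG_X0 rhom_CC)
lemma T_X1: "T c X1 = X1 + CC c * X0" by (simp add: T_def evalG_X1 rhom_CC)
lemma T_X2: "T c X2 = X2 + 2 * CC c * X1 + CC c ^ 2 * X0" by (simp add: T_def evalG_X2 rhom_CC)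

lemma T_0: "T 0 f = f"
proof -
  have "CC 0 = (0 :: 'a mpoly3)" by (simp add: CC_def)
  then show ?thesis by (simp add: T_def evalG_id)
qed

lemma T_comp: "T d (T c f) = T (c + d) f"
proof -
  have hc: "T d \<circ> CC = CC" by (rule ext) (simp add: T_CC)
  have cadd: "CC (c + d) = CC c + CC d" by (simp add: rhom_add[OF rhom_CC])
  have "T d (T c f) = evalG (T d \<circ> CC) f (T d X0) (T d (X1 + CC c * X0))
          (T d (X2 + 2 * CC c * X1 + CC c ^ 2 * X0))"
    unfolding T_def[of c] by (rule evalG_commute[OF rhom_CC rhom_T])
  also have "\<dots> = T (c + d) f"
    unfolding hc T_def[of "c+d"] cadd
    by (simp add: rhom_add[OF rhom_T] rhom_mult[OF rhom_T] rhom_power[OF rhom_T] rhom_numeral[OF rhom_T]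
        T_CC T_X0 T_X1 T_X2, simp add: algebra_simps power2_eq_square)
  finally show ?thesis .
qed

lemma T_eq0: "T c f = 0 \<longleftrightarrow> f = 0"
proof
  assume "T c f = 0"
  then have "T (-c) (T c f) = 0" by (simp add: rhom_0[OF rhom_T])
  then show "f = 0" by (simp add: T_comp T_0)
qed (simp add: rhom_0[OF rhom_T])

lemma T_inj: "T c f = T c g \<longleftrightarrow> f = g"
  using T_eq0[of c "f - g"] by (simp add: rhom_diff[OF rhom_T])

definition iota :: "'a::field mpoly3 \<Rightarrow> 'a ratfun3" where "iota p = Fract p 1"

lemma rhom_iota: "rhom iota" by (simp add: rhom_def iota_def fract_collapse)

lemma iota_CC: "iota \<circ> CC = cK" by (rule ext) (simp add: iota_def CC_def cK_def)
lemma rhom_cK: "rhom cK" using rhom_comp[OF rhom_CC rhom_iota] unfolding iota_CC .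

lemma eval3_T: "eval3 f A0 (A1 + cK c * A0) (A2 + cK (2 * c) * A1 + cK (c ^ 2) * A0) = Fract (T c f) 1"
proof -
  have "Fract (T c f) 1 = iota (T c f)" by (simp add: iota_def)
  also have "\<dots> = evalG (iota \<circ> CC) f (iota X0) (iota (X1 + CC c * X0)) (iota (X2 + 2 * CC c * X1 + CC c ^ 2 * X0))"
    unfolding T_def by (rule evalG_commute[OF rhom_CC rhom_iota])
  also have "\<dots> = eval3 f A0 (A1 + cK c * A0) (A2 + cK (2 * c) * A1 + cK (c ^ 2) * A0)"
  proof -
    have i0: "iota X0 = A0" "iota X1 = A1" "iota X2 = A2" "iota (CC c) = cK c"
      by (simp_all add: iota_def X0_def X1_def X2_def A0_def A1_def A2_def CC_def cK_def)
    have c2: "cK (2 * c) = 2 * cK c" "cK (c ^ 2) = cK c ^ 2"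
      by (simp_all add: rhom_mult[OF rhom_cK] rhom_power[OF rhom_cK] rhom_numeral[OF rhom_cK])
    have j1: "iota (X1 + CC c * X0) = A1 + cK c * A0"
      by (simp only: rhom_add[OF rhom_iota] rhom_mult[OF rhom_iota] i0)
    have j2: "iota (X2 + 2 * CC c * X1 + CC c ^ 2 * X0) = A2 + cK (2 * c) * A1 + cK (c ^ 2) * A0"
      by (simp only: rhom_add[OF rhom_iota] rhom_mult[OF rhom_iota] rhom_power[OF rhom_iota] rhom_numeral[OF rhom_iota] i0 c2)
    show ?thesis unfolding eval3_evalG iota_CC i0 j1 j2 ..
  qed
  finally show ?thesis by simp
qed

lemma eval3_id: "eval3 f A0 A1 A2 = Fract f 1"
  using eval3_T[of f 0] by (simp add: T_0 rhom_0[OF rhom_cK])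

lemma ev: "g' \<noteq> 0 \<Longrightarrow> eval3 f' A0 (A1 + cK c * A0) (A2 + cK (2 * c) * A1 + cK (c ^ 2) * A0)
        / eval3 g' A0 (A1 + cK c * A0) (A2 + cK (2 * c) * A1 + cK (c ^ 2) * A0) = Fract (T c f') (T c g')"
  unfolding eval3_T divide_fract by simp

lemma allx: assumes "g \<noteq> 0" "g' \<noteq> 0" "Fract f g = Fract f' g'"
  shows "Fract (T c f') (T c g') = Fract (T c f) (T c g)"
proof -
  have "f * g' = f' * g" using assms by (simp add: eq_fract(1))
  then have "T c f * T c g' = T c f' * T c g" by (metis rhom_mult[OF rhom_T])
  then show ?thesis using assms by (simp add: eq_fract(1) T_eq0)
qed

lemma sigma_Fract:
  assumes "g \<noteq> 0"
  shows "sigma c (Fract f g) = Fract (T c f) (T c g)"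
proof -
  define P where "P = (\<lambda>s. \<exists>f' g'. g' \<noteq> 0 \<and> Fract f g = Fract f' g' \<and>
      s = eval3 f' A0 (A1 + cK c * A0) (A2 + cK (2 * c) * A1 + cK (c ^ 2) * A0)
        / eval3 g' A0 (A1 + cK c * A0) (A2 + cK (2 * c) * A1 + cK (c ^ 2) * A0))"
  have sd: "sigma c (Fract f g) = (SOME s. P s)" unfolding sigma_def P_def by (rule refl)
  have all: "s = Fract (T c f) (T c g)" if "P s" for s
    using that assms ev allx unfolding P_def by metis
  have "P (Fract (T c f) (T c g))" unfolding P_def
    using ev[OF assms] assms by metis
  then have "P (SOME s. P s)" by (rule someI)
  then show ?thesis using all sd by metis
qed



lemma rhom_sigma: "rhom (sigma c)"
  unfolding rhom_def
proof (intro conjI allI)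
  fix x y :: "'a ratfun3"
  obtain a b where x: "x = Fract a b" "b \<noteq> 0" by (cases x)
  obtain a' b' where y: "y = Fract a' b'" "b' \<noteq> 0" by (cases y)
  have nz: "T c b \<noteq> 0" "T c b' \<noteq> 0" using x y by (simp_all add: T_eq0)
  show "sigma c (x + y) = sigma c x + sigma c y"
    using x y nz by (simp add: sigma_Fract rhom_add[OF rhom_T] rhom_mult[OF rhom_T])
  show "sigma c (x * y) = sigma c x * sigma c y"
    using x y nz by (simp add: sigma_Fract rhom_add[OF rhom_T] rhom_mult[OF rhom_T])
next
  show "sigma c 1 = 1"
  proof -
    have "sigma c (Fract 1 1) = Fract (T c 1) (T c 1)" by (rule sigma_Fract) simp
    then show ?thesis by (simp add: rhom_1[OF rhom_T] fract_collapse)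
  qed
qed

lemma sigma_iota: "sigma c (Fract f 1) = Fract (T c f) 1"
  by (simp add: sigma_Fract rhom_1[OF rhom_T])

lemma sigma_cK: "sigma c (cK a) = cK a"
  by (simp add: cK_def sigma_iota T_CC[unfolded CC_def])

lemma sigma_A0: "sigma c A0 = A0"
  by (simp add: A0_def sigma_iota T_X0[unfolded X0_def])

lemma iotaF1: fixes x y :: "'a::field mpoly3" shows "Fract (x + y) 1 = Fract x 1 + Fract y 1"
  using rhom_add[OF rhom_iota, of x y] unfolding iota_def .
lemma iotaF2: fixes x y :: "'a::field mpoly3" shows "Fract (x * y) 1 = Fract x 1 * Fract y 1"
  using rhom_mult[OF rhom_iota, of x y] unfolding iota_def .
lemma iotaF3: fixes x :: "'a::field mpoly3" shows "Fract (x ^ n) 1 = Fract x 1 ^ n"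
  using rhom_power[OF rhom_iota, of x n] unfolding iota_def .
lemma iotaF4: "Fract (numeral m) 1 = (numeral m :: 'a::field ratfun3)"
  using rhom_numeral[OF rhom_iota, of m] unfolding iota_def .
lemmas iotaF = iotaF1 iotaF2 iotaF3 iotaF4

lemma iota_basic: "Fract X0 1 = A0" "Fract X1 1 = A1" "Fract X2 1 = A2" "Fract (CC c) 1 = cK c"
  by (simp_all add: X0_def X1_def X2_def A0_def A1_def A2_def CC_def cK_def)

lemma sigma_A1: "sigma c A1 = A1 + cK c * A0"
proof -
  have "sigma c A1 = Fract (T c X1) 1" by (simp add: sigma_iota iota_basic(2)[symmetric])
  also have "\<dots> = A1 + cK c * A0" by (simp only: T_X1 iotaF iota_basic)
  finally show ?thesis .
qed

lemma sigma_A2: "sigma c A2 = A2 + 2 * cK c * A1 + cK c ^ 2 * A0"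
proof -
  have "sigma c A2 = Fract (T c X2) 1" by (simp add: sigma_iota iota_basic(3)[symmetric])
  also have "\<dots> = A2 + 2 * cK c * A1 + cK c ^ 2 * A0" by (simp only: T_X2 iotaF iota_basic)
  finally show ?thesis .
qed

lemma sigma_comp: "sigma d (sigma c x) = sigma (c + d) x"
proof -
  obtain a b where x: "x = Fract a b" "b \<noteq> 0" by (cases x)
  then show ?thesis by (simp add: sigma_Fract T_eq0 T_comp)
qed

lemma sigma_0: "sigma 0 x = x"
proof -
  obtain a b where x: "x = Fract a b" "b \<noteq> 0" by (cases x)
  then show ?thesis by (simp add: sigma_Fract T_0)
qed

lemma sigma_eq0: "sigma c x = 0 \<longleftrightarrow> x = 0"
proof
  assume "sigma c x = 0"
  then have "sigma (-c) (sigma c x) = 0" by (simp add: rhom_0[OF rhom_sigma])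
  then show "x = 0" by (simp add: sigma_comp sigma_0)
qed (simp add: rhom_0[OF rhom_sigma])

lemma sigma_eval3: "sigma c (eval3 f x y z) = eval3 f (sigma c x) (sigma c y) (sigma c z)"
proof -
  have "sigma c \<circ> cK = cK" by (rule ext) (simp add: sigma_cK)
  then show ?thesis unfolding eval3_evalG using evalG_commute[OF rhom_cK rhom_sigma] by metis
qed

subsection \<open>Frobenius\<close>

lemma frob1:
  fixes x y :: "'a::comm_ring_1"
  assumes "prime p" "CHAR('a) = p"
  shows "(x + y) ^ p = x ^ p + y ^ p"
proof -
  let ?g = "\<lambda>k. of_nat (p choose k) * x ^ k * y ^ (p - k)"
  have p0: "p \<noteq> 0" using assms prime_gt_0_nat by auto
  have mid: "?g k = 0" if "k \<in> {..p} - {0, p}" for k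
  proof -
    have "p dvd (p choose k)" using that p0 assms(1) by (intro dvd_choose_prime) auto
    then have "of_nat (p choose k) = (0::'a)" using assms(2) by (simp add: of_nat_eq_0_iff_char_dvd)
    then show ?thesis by simp
  qed
  have "(x + y) ^ p = (\<Sum>k\<le>p. ?g k)" by (rule binomial_ring)
  also have "\<dots> = (\<Sum>k\<in>{0, p}. ?g k)"
    by (rule sum.mono_neutral_right) (use mid in auto)
  also have "\<dots> = x ^ p + y ^ p" using p0 by simp
  finally show ?thesis .
qed

lemma frob:
  fixes x y :: "'a::comm_ring_1"
  assumes "prime p" "CHAR('a) = p"
  shows "(x + y) ^ (p ^ n) = x ^ (p ^ n) + y ^ (p ^ n)"
proof (induction n arbitrary: x y)
  case 0 then show ?case by simp
next
  case (Suc n)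
  have "(x + y) ^ (p ^ Suc n) = ((x + y) ^ p) ^ (p ^ n)" by (simp add: power_mult)
  also have "\<dots> = (x ^ p + y ^ p) ^ (p ^ n)" using frob1[OF assms] by simp
  also have "\<dots> = x ^ (p ^ Suc n) + y ^ (p ^ Suc n)" using Suc by (simp add: power_mult)
  finally show ?case .
qed




lemma Fq_add:
  assumes "prime p" "CHAR('a::field) = p" "c \<in> Fq (p ^ n)" "d \<in> Fq (p ^ n)"
  shows "c + d \<in> (Fq (p ^ n) :: 'a set)"
  using assms frob[OF assms(1,2)] by (simp add: Fq_def)

lemma Fq_reindex:
  assumes "finite (Fq q :: 'a::field set)" "\<And>d. d \<in> Fq q \<Longrightarrow> d + c \<in> Fq q"
  shows "(\<Prod>d\<in>Fq q. F (d + c)) = (\<Prod>d\<in>(Fq q :: 'a set). (F d :: 'b::comm_monoid_mult))"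
proof -
  have inj: "inj_on (\<lambda>d. d + c) (Fq q)" by (rule inj_onI) simp
  have im: "(\<lambda>d. d + c) ` Fq q = Fq q"
    by (rule endo_inj_surj[OF assms(1) _ inj]) (use assms(2) in auto)
  have "(\<Prod>d\<in>Fq q. F d) = (\<Prod>d\<in>(\<lambda>d. d + c) ` Fq q. F d)" by (simp add: im)
  also have "\<dots> = (\<Prod>d\<in>Fq q. F (d + c))" by (simp add: prod.reindex[OF inj])
  finally show ?thesis by simp
qed

lemma sigma_Delta: "sigma c Delta = Delta"
  unfolding Delta_def
  by (simp add: rhom_diff[OF rhom_sigma] rhom_mult[OF rhom_sigma] rhom_power[OF rhom_sigma]
      sigma_A0 sigma_A1 sigma_A2, simp add: algebra_simps power2_eq_square)

lemma sigma_beta: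
  assumes "finite (Fq q :: 'a::field set)" "\<And>d. d \<in> Fq q \<Longrightarrow> d + c \<in> Fq q"
  shows "sigma c (beta q) = (beta q :: 'a ratfun3)"
proof -
  have e: "sigma c (A1 + cK d * A0) = A1 + cK (d + c) * A0" for d
    by (simp add: rhom_add[OF rhom_sigma] rhom_mult[OF rhom_sigma] sigma_A0 sigma_A1 sigma_cK
        rhom_add[OF rhom_cK] algebra_simps)
  have "sigma c (beta q) = (\<Prod>d\<in>Fq q. A1 + cK (d + c) * A0)"
    unfolding beta_def rhom_prod[OF rhom_sigma] o_def e ..
  also have "\<dots> = beta q" unfolding beta_def by (rule Fq_reindex[OF assms])
  finally show ?thesis .
qed

lemma gen_sub_inv:
  assumes "finite (Fq q :: 'a::field set)" "\<And>c d. c \<in> Fq q \<Longrightarrow> d \<in> Fq q \<Longrightarrow> d + c \<in> (Fq q :: 'a set)"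
  shows "gen_field A0 (beta q) Delta \<subseteq> (invariant_field q :: 'a ratfun3 set)"
proof
  fix r :: "'a ratfun3" assume "r \<in> gen_field A0 (beta q) Delta"
  then obtain f g where r: "r = eval3 f A0 (beta q) Delta / eval3 g A0 (beta q) Delta"
    unfolding gen_field_def by blast
  show "r \<in> invariant_field q"
    unfolding invariant_field_def
  proof (intro CollectI ballI)
    fix c :: 'a assume c: "c \<in> Fq q"
    have b: "sigma c (beta q) = beta q" by (rule sigma_beta[OF assms(1)], rule assms(2)[OF c])
    show "sigma c r = r"
      unfolding r rhom_divide[OF rhom_sigma] sigma_eval3 b sigma_A0 sigma_Delta ..
  qed
qed




subsection \<open>gen_field is a subfield\<close>

lemma rhom_ev: "rhom (\<lambda>f. eval3 f x y z)"
  unfolding eval3_evalG by (rule rhom_evalG[OF rhom_cK])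

lemma gf_mem: "r \<in> gen_field x y z \<longleftrightarrow> (\<exists>f g. r = eval3 f x y z / eval3 g x y z \<and> eval3 g x y z \<noteq> 0)"
  unfolding gen_field_def by blast

lemma gf_eval: "eval3 f x y z \<in> gen_field x y z"
  unfolding gf_mem by (rule exI[of _ f], rule exI[of _ 1]) (simp add: rhom_1[OF rhom_ev])

lemma gf_cK: "cK a \<in> gen_field x y z"
  using gf_eval[of "[:[:[:a:]:]:]" x y z] by (simp add: eval3_evalG evalG_C rhom_cK)

lemma gf_x: "x \<in> gen_field x y z" "y \<in> gen_field x y z" "z \<in> gen_field x y z"
  using gf_eval[of X0 x y z] gf_eval[of X1 x y z] gf_eval[of X2 x y z]
  by (simp_all add: eval3_evalG evalG_X0 evalG_X1 evalG_X2 rhom_cK)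

lemma gf_add: assumes "r \<in> gen_field x y z" "s \<in> gen_field x y z" shows "r + s \<in> gen_field x y z"
proof -
  obtain f g where r: "r = eval3 f x y z / eval3 g x y z" "eval3 g x y z \<noteq> 0" using assms(1) gf_mem by blast
  obtain f' g' where s: "s = eval3 f' x y z / eval3 g' x y z" "eval3 g' x y z \<noteq> 0" using assms(2) gf_mem by blast
  have "r + s = eval3 (f * g' + f' * g) x y z / eval3 (g * g') x y z"
    unfolding r(1) s(1) using r(2) s(2) by (simp add: rhom_add[OF rhom_ev] rhom_mult[OF rhom_ev] add_divide_distrib)
  moreover have "eval3 (g * g') x y z \<noteq> 0" using r s by (simp add: rhom_mult[OF rhom_ev])
  ultimately show ?thesis unfolding gf_mem by blast
qed

lemma gf_mult: assumes "r \<in> gen_field x y z" "s \<in> gen_field x y z" shows "r * s \<in> gen_field x y z"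
proof -
  obtain f g where r: "r = eval3 f x y z / eval3 g x y z" "eval3 g x y z \<noteq> 0" using assms(1) gf_mem by blast
  obtain f' g' where s: "s = eval3 f' x y z / eval3 g' x y z" "eval3 g' x y z \<noteq> 0" using assms(2) gf_mem by blast
  have "r * s = eval3 (f * f') x y z / eval3 (g * g') x y z"
    using r s by (simp add: rhom_mult[OF rhom_ev])
  moreover have "eval3 (g * g') x y z \<noteq> 0" using r s by (simp add: rhom_mult[OF rhom_ev])
  ultimately show ?thesis unfolding gf_mem by blast
qed

lemma gf_inverse: assumes "r \<in> gen_field x y z" shows "inverse r \<in> gen_field x y z"
proof -
  obtain f g where r: "r = eval3 f x y z / eval3 g x y z" "eval3 g x y z \<noteq> 0" using assms(1) gf_mem by blast
  show ?thesis
  proof (cases "eval3 f x y z = 0")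
    case True
    then have "inverse r = eval3 0 x y z / eval3 1 x y z" using r by (simp add: rhom_0[OF rhom_ev] rhom_1[OF rhom_ev])
    then show ?thesis unfolding gf_mem by (metis rhom_1[OF rhom_ev] one_neq_zero)
  next
    case False
    then have "inverse r = eval3 g x y z / eval3 f x y z" using r by simp
    then show ?thesis unfolding gf_mem using False by blast
  qed
qed

lemma gf_divide: "r \<in> gen_field x y z \<Longrightarrow> s \<in> gen_field x y z \<Longrightarrow> r / s \<in> gen_field x y z"
  by (simp add: divide_inverse gf_mult gf_inverse)

lemma gf_uminus: "r \<in> gen_field x y z \<Longrightarrow> - r \<in> gen_field x y z"
proof -
  assume "r \<in> gen_field x y z"
  moreover have "- 1 \<in> gen_field x y z" using gf_cK[of "-1" x y z] by (simp add: rhom_uminus[OF rhom_cK] rhom_1[OF rhom_cK])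
  ultimately show ?thesis using gf_mult by fastforce
qed

lemma gf_diff: "r \<in> gen_field x y z \<Longrightarrow> s \<in> gen_field x y z \<Longrightarrow> r - s \<in> gen_field x y z"
  using gf_add[of r x y z "- s"] gf_uminus[of s x y z] by simp

lemma gf_0: "0 \<in> gen_field x y z" "1 \<in> gen_field x y z"
  using gf_cK[of 0 x y z] gf_cK[of 1 x y z] by (simp_all add: rhom_0[OF rhom_cK] rhom_1[OF rhom_cK])

lemma gf_power: "r \<in> gen_field x y z \<Longrightarrow> r ^ n \<in> gen_field x y z"
  by (induction n) (simp_all add: gf_0 gf_mult)

lemma poly_map_closed:
  assumes "\<And>a. h a \<in> S" "h 0 = 0" "x \<in> S" "0 \<in> S"
    "\<And>u v. u \<in> S \<Longrightarrow> v \<in> S \<Longrightarrow> u + v \<in> S" "\<And>u v. u \<in> S \<Longrightarrow> v \<in> S \<Longrightarrow> u * v \<in> S"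
  shows "poly (map_poly h p) x \<in> S"
  by (induction p) (simp_all add: map_poly_pCons assms)

lemma evalG_closed:
  assumes k: "rhom k" and "\<And>a. k a \<in> S" "x0 \<in> S" "x1 \<in> S" "x2 \<in> S" "0 \<in> S"
    "\<And>u v. u \<in> S \<Longrightarrow> v \<in> S \<Longrightarrow> u + v \<in> S" "\<And>u v. u \<in> S \<Longrightarrow> v \<in> S \<Longrightarrow> u * v \<in> S"
  shows "evalG k f x0 x1 x2 \<in> S"
  unfolding evalG_def
  by (rule poly_map_closed, rule poly_map_closed, rule poly_map_closed) (simp_all add: assms rhom_0[OF k])




lemma A0_nz: "A0 \<noteq> (0 :: 'a::field ratfun3)"
proof -
  have "Fract [:[:[:0,1::'a:]:]:] 1 \<noteq> Fract 0 1" by (subst eq_fract(1)) simp_all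
  then show ?thesis by (simp add: A0_def fract_collapse)
qed

lemma cK_inj: "cK a = cK b \<longleftrightarrow> a = b"
  by (simp add: cK_def eq_fract(1))

lemma prod_linear:
  fixes q :: nat
  assumes fin: "finite (Fq q :: 'a::field set)" and cardq: "card (Fq q :: 'a set) = q"
    and q2: "q \<ge> 2" and qodd: "odd q"
  shows "(\<Prod>d\<in>(Fq q :: 'a set). t + cK d) = t ^ q - t"
proof -
  define P :: "'a ratfun3 poly" where "P = (\<Prod>d\<in>Fq q. [:cK d, 1:])"
  define Q :: "'a ratfun3 poly" where "Q = monom 1 q - [:0, 1:]"
  have degP: "degree P = q" unfolding P_def
    by (subst degree_prod_eq_sum_degree) (simp_all add: cardq)
  have lcP: "coeff P q = 1"
  proof -
    have "coeff P q = lead_coeff P" using degP by simp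
    also have "\<dots> = 1" unfolding P_def lead_coeff_prod by simp
    finally show ?thesis .
  qed
  have degQ: "degree Q \<le> q" unfolding Q_def
    by (rule order.trans[OF degree_diff_le_max]) (use q2 degree_monom_le[of "1::'a ratfun3" q] in auto)
  have cQ: "coeff Q q = 1"
  proof -
    have "coeff [:0, 1::'a ratfun3:] q = 0" by (rule coeff_eq_0) (use q2 in simp)
    then show ?thesis by (simp add: Q_def)
  qed
  let ?A = "(\<lambda>e. - cK e) ` (Fq q :: 'a set)"
  have cardA: "card ?A = q"
    by (subst card_image) (auto simp: inj_on_def cK_inj cardq)
  have "P = Q"
  proof (rule poly_eqI_degree_lead_coeff[of P q Q ?A])
    show "coeff P q = coeff Q q" using lcP cQ by simp
    show "q \<le> card ?A" using cardA by simp
    show "degree P \<le> q" using degP by simp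
    show "degree Q \<le> q" by (rule degQ)
    fix z assume "z \<in> ?A"
    then obtain e where e: "e \<in> Fq q" "z = - cK e" by blast
    have "poly P z = (\<Prod>d\<in>Fq q. cK d - cK e)" unfolding P_def poly_prod using e by simp
    also have "\<dots> = 0" using e fin by (intro prod_zero) auto
    finally have p0: "poly P z = 0" .
    have "(- e) ^ q = - (e ^ q)" using qodd by (simp add: power_minus_odd)
    then have "(- e) ^ q = - e" using e by (simp add: Fq_def)
    then have "cK ((- e) ^ q) = cK (- e)" by simp
    then have "(- cK e) ^ q = - cK e"
      by (simp add: rhom_power[OF rhom_cK] rhom_uminus[OF rhom_cK])
    then have "poly Q z = 0" using e q2 by (simp add: Q_def poly_monom)
    then show "poly P z = poly Q z" using p0 by simp
  qed
  then have "poly P t = poly Q t" by simp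
  then show ?thesis unfolding P_def Q_def poly_prod by (simp add: poly_monom add.commute)
qed

lemma beta_eq:
  fixes q :: nat
  assumes fin: "finite (Fq q :: 'a::field set)" and cardq: "card (Fq q :: 'a set) = q"
    and q2: "q \<ge> 2" and qodd: "odd q"
  shows "(beta q :: 'a ratfun3) = A1 ^ q - A0 ^ (q - 1) * A1"
proof -
  let ?t = "A1 / A0 :: 'a ratfun3"
  have nz: "A0 \<noteq> (0 :: 'a ratfun3)" by (rule A0_nz)
  have "beta q = (\<Prod>d\<in>(Fq q :: 'a set). A0 * (?t + cK d))"
    unfolding beta_def using nz by (intro prod.cong) (simp_all add: field_simps)
  also have "\<dots> = A0 ^ q * (?t ^ q - ?t)"
    by (simp add: prod.distrib cardq prod_linear[OF fin cardq q2 qodd])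
  also have "\<dots> = A1 ^ q - A0 ^ (q - 1) * A1"
  proof -
    have "A0 ^ q = A0 * A0 ^ (q - 1)" using q2 by (metis Suc_diff_1 not_numeral_le_zero neq0_conv power_Suc le_0_eq)
    then show ?thesis using nz by (simp add: power_divide field_simps) (simp add: \<open>A0 ^ q = A0 * A0 ^ (q - 1)\<close>)
  qed
  finally show ?thesis .
qed




definition KK :: "nat \<Rightarrow> 'a::field ratfun3 set" where "KK q = gen_field A0 (beta q) Delta"
definition VV :: "nat \<Rightarrow> 'a::field ratfun3 set" where
  "VV q = {poly R A1 | R. (\<forall>i. coeff R i \<in> KK q) \<and> degree R < q}"

lemma KK_closed:
  "r \<in> KK q \<Longrightarrow> s \<in> KK q \<Longrightarrow> r + s \<in> KK q"
  "r \<in> KK q \<Longrightarrow> s \<in> KK q \<Longrightarrow> r * s \<in> KK q"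
  "r \<in> KK q \<Longrightarrow> s \<in> KK q \<Longrightarrow> r - s \<in> KK q"
  "r \<in> KK q \<Longrightarrow> s \<in> KK q \<Longrightarrow> r / s \<in> KK q"
  "r \<in> KK q \<Longrightarrow> - r \<in> KK q"
  "r \<in> KK q \<Longrightarrow> inverse r \<in> KK q"
  "r \<in> KK q \<Longrightarrow> r ^ n \<in> KK q"
  "0 \<in> KK q" "1 \<in> KK q" "cK a \<in> KK q" "A0 \<in> KK q" "beta q \<in> KK q" "Delta \<in> KK q"
  unfolding KK_def by (simp_all add: gf_add gf_mult gf_diff gf_divide gf_uminus gf_inverse gf_power gf_0 gf_cK gf_x)

context
  fixes q :: nat
  assumes fin: "finite (Fq q :: 'a::field set)" and cardq: "card (Fq q :: 'a set) = q"
    and q2: "q \<ge> 2" and qodd: "odd q"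
    and addc: "\<And>c d. c \<in> Fq q \<Longrightarrow> d \<in> Fq q \<Longrightarrow> d + c \<in> (Fq q :: 'a set)"
begin

lemma VV_K: "r \<in> KK q \<Longrightarrow> r \<in> (VV q :: 'a ratfun3 set)"
  unfolding VV_def
  by (rule CollectI, rule exI[of _ "[:r:]"]) (use q2 in \<open>auto simp: coeff_pCons KK_closed split: nat.splits\<close>)

lemma VV_add: "v \<in> VV q \<Longrightarrow> w \<in> VV q \<Longrightarrow> v + w \<in> (VV q :: 'a ratfun3 set)"
proof -
  assume "v \<in> VV q" "w \<in> VV q"
  then obtain R S where R: "v = poly R A1" "\<forall>i. coeff R i \<in> KK q" "degree R < q"
    and S: "w = poly S A1" "\<forall>i. coeff S i \<in> KK q" "degree S < q" unfolding VV_def by blast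
  have "degree (R + S) < q" using R S degree_add_le_max[of R S] by linarith
  moreover have "\<forall>i. coeff (R + S) i \<in> KK q" using R S by (simp add: KK_closed)
  moreover have "v + w = poly (R + S) A1" using R S by simp
  ultimately show ?thesis unfolding VV_def by blast
qed

lemma VV_scale: "a \<in> KK q \<Longrightarrow> w \<in> VV q \<Longrightarrow> a * w \<in> (VV q :: 'a ratfun3 set)"
proof -
  assume a: "a \<in> KK q" and "w \<in> VV q"
  then obtain S where S: "w = poly S A1" "\<forall>i. coeff S i \<in> KK q" "degree S < q" unfolding VV_def by blast
  have "degree (smult a S) < q" using S degree_smult_le[of a S] by linarith
  moreover have "\<forall>i. coeff (smult a S) i \<in> KK q" using S a by (simp add: KK_closed)
  moreover have "a * w = poly (smult a S) A1" using S by simp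
  ultimately show ?thesis unfolding VV_def by blast
qed

lemma poly_M: "poly (monom 1 q - [:beta q, A0 ^ (q - 1):]) A1 = (0 :: 'a ratfun3)"
  using beta_eq[OF fin cardq q2 qodd] by (simp add: poly_monom)

lemma VV_A1: "v \<in> VV q \<Longrightarrow> A1 * v \<in> (VV q :: 'a ratfun3 set)"
proof -
  assume "v \<in> VV q"
  then obtain R where R: "v = poly R A1" "\<forall>i. coeff R i \<in> KK q" "degree R < q" unfolding VV_def by blast
  define M :: "'a ratfun3 poly" where "M = monom 1 q - [:beta q, A0 ^ (q - 1):]"
  define R' where "R' = pCons 0 R - smult (coeff R (q - 1)) M"
  have cM: "coeff M i \<in> KK q" for i
    by (cases i; cases "i - 1") (auto simp: M_def KK_closed)
  have cR': "\<forall>i. coeff R' i \<in> KK q"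
  proof
    fix i
    have "coeff (pCons 0 R) i \<in> KK q" using R by (cases i) (auto simp: KK_closed)
    then show "coeff R' i \<in> KK q" unfolding R'_def using cM R by (simp add: KK_closed)
  qed
  have c2: "coeff [:beta q, A0 ^ (q - 1):] k = (0 :: 'a ratfun3)" if "k \<ge> q" for k
    by (rule coeff_eq_0) (use that q2 in auto)
  have "degree R' < q"
  proof (rule degree_lessI)
    show "R' \<noteq> 0 \<or> 0 < q" using q2 by simp
    show "\<forall>k\<ge>q. coeff R' k = 0"
    proof (intro allI impI)
      fix k assume k: "q \<le> k"
      show "coeff R' k = 0"
      proof (cases "k = q")
        case True
        have "coeff (pCons 0 R) q = coeff R (q - 1)" using q2 by (cases q) auto
        then show ?thesis using True c2[of q] by (auto simp: R'_def M_def)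
      next
        case False
        then have "k - 1 \<ge> q" "k = Suc (k - 1)" using k q2 by auto
        then have "coeff (pCons 0 R) k = 0" using R(3) by (metis coeff_pCons_Suc coeff_eq_0 le_less_trans not_less)
        then show ?thesis using False c2[of k] k by (simp add: R'_def M_def)
      qed
    qed
  qed
  moreover have "A1 * v = poly R' A1"
    using poly_M unfolding R'_def M_def R(1) by simp
  ultimately show ?thesis using cR' unfolding VV_def by blast
qed

lemma VV_mult_aux: "\<forall>i. coeff R i \<in> KK q \<Longrightarrow> w \<in> VV q \<Longrightarrow> poly R A1 * w \<in> (VV q :: 'a ratfun3 set)"
proof (induction R)
  case 0
  then show ?case using VV_K[OF KK_closed(8)] by simp
next
  case (pCons a R)
  have a: "a \<in> KK q" using pCons.prems(1) spec[OF pCons.prems(1), of 0] by simp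
  have "\<forall>i. coeff R i \<in> KK q" using pCons.prems(1) by (metis coeff_pCons_Suc)
  then have "poly R A1 * w \<in> VV q" using pCons by blast
  then have "A1 * (poly R A1 * w) \<in> VV q" by (rule VV_A1)
  moreover have "a * w \<in> VV q" by (rule VV_scale[OF a pCons.prems(2)])
  ultimately show ?case by (simp add: algebra_simps VV_add)
qed

lemma VV_1: "1 \<in> (VV q :: 'a ratfun3 set)" by (rule VV_K[OF KK_closed(9)])
lemma VV_0: "0 \<in> (VV q :: 'a ratfun3 set)" by (rule VV_K[OF KK_closed(8)])

lemma VV_mult: "v \<in> VV q \<Longrightarrow> w \<in> VV q \<Longrightarrow> v * w \<in> (VV q :: 'a ratfun3 set)"
  using VV_mult_aux unfolding VV_def[of q] by blast

lemma VV_A1': "A1 \<in> (VV q :: 'a ratfun3 set)"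
  using VV_A1[OF VV_1] by simp

lemma VV_A2: "A2 \<in> (VV q :: 'a ratfun3 set)"
proof -
  have "A2 = inverse A0 * (A1 * A1) + (- inverse A0 * Delta :: 'a ratfun3)"
  proof -
    have "A1 * A1 - Delta = (A0 * A2 :: 'a ratfun3)" by (simp add: Delta_def power2_eq_square)
    then have "A2 = inverse A0 * (A1 * A1 - Delta :: 'a ratfun3)" using A0_nz[where 'a='a] by (simp add: field_simps)
    then show ?thesis by (simp add: algebra_simps)
  qed
  moreover have "inverse A0 * (A1 * A1) + (- inverse A0 * Delta :: 'a ratfun3) \<in> VV q"
    by (intro VV_add VV_mult VV_K VV_A1' KK_closed)
  ultimately show ?thesis by simp
qed

lemma VV_Fract: "Fract f 1 \<in> (VV q :: 'a ratfun3 set)"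
proof -
  have "eval3 f A0 A1 A2 \<in> (VV q :: 'a ratfun3 set)"
    unfolding eval3_evalG
    by (rule evalG_closed[OF rhom_cK]) (simp_all add: VV_K KK_closed VV_A1' VV_A2 VV_0 VV_add VV_mult)
  then show ?thesis by (simp add: eval3_id)
qed

lemma VV_prod: "(\<And>x. x \<in> A \<Longrightarrow> F x \<in> VV q) \<Longrightarrow> prod F A \<in> (VV q :: 'a ratfun3 set)"
  by (induction A rule: infinite_finite_induct) (simp_all add: VV_1 VV_mult)

lemma KK_inv: "c \<in> Fq q \<Longrightarrow> k \<in> KK q \<Longrightarrow> sigma c k = (k :: 'a ratfun3)"
  using gen_sub_inv[OF fin addc] unfolding KK_def invariant_field_def by blast

lemma core:
  assumes r: "r \<in> (VV q :: 'a ratfun3 set)" and inv: "\<forall>c\<in>Fq q. sigma c r = r"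
  shows "r \<in> KK q"
proof -
  obtain R where R: "r = poly R A1" "\<forall>i. coeff R i \<in> KK q" "degree R < q" using r unfolding VV_def by blast
  define D where "D = R - [:r:]"
  have roots: "poly D (A1 + cK c * A0) = 0" if c: "c \<in> Fq q" for c
  proof -
    have mapR: "map_poly (sigma c) R = R"
      by (rule poly_eqI) (simp add: coeff_map_poly rhom_0[OF rhom_sigma] KK_inv[OF c] R(2))
    have "r = sigma c r" using inv c by simp
    also have "\<dots> = poly R (A1 + cK c * A0)"
      unfolding R(1) rhom_poly_commute[OF rhom_sigma] mapR sigma_A1 ..
    finally show ?thesis by (simp add: D_def)
  qed
  have "D = 0"
  proof (rule ccontr)
    assume nz: "D \<noteq> 0"
    have degD: "degree D < q" unfolding D_def using R(3) degree_diff_le_max[of R "[:r:]"] q2 by simp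
    let ?P = "(\<lambda>c. A1 + cK c * A0) ` (Fq q :: 'a set)"
    have inj: "inj_on (\<lambda>c. A1 + cK c * A0) (Fq q :: 'a set)"
      by (rule inj_onI) (use A0_nz[where 'a='a] in \<open>auto simp: cK_inj\<close>)
    have "q = card ?P" using card_image[OF inj] cardq by simp
    also have "\<dots> \<le> card {x. poly D x = 0}"
      by (rule card_mono[OF poly_roots_finite[OF nz]]) (use roots in auto)
    also have "\<dots> \<le> degree D" by (rule card_poly_roots_bound[OF nz])
    finally show False using degD by simp
  qed
  then have "R = [:r:]" by (simp add: D_def)
  then have "r = coeff R 0" by simp
  then show ?thesis using R(2) by metis
qed

lemma Fq_0: "(0 :: 'a) \<in> Fq q"
  using q2 by (simp add: Fq_def)

lemma inv_sub_gen: "invariant_field q \<subseteq> (KK q :: 'a ratfun3 set)"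
proof
  fix r :: "'a ratfun3" assume "r \<in> invariant_field q"
  then have inv: "\<forall>c\<in>Fq q. sigma c r = r" unfolding invariant_field_def by blast
  obtain f g where fg: "r = Fract f g" "g \<noteq> 0" by (cases r)
  define G :: "'a ratfun3" where "G = Fract g 1"
  have "Fract g 1 \<noteq> Fract 0 1" using fg(2) by (subst eq_fract(1)) simp_all
  then have Gnz: "G \<noteq> 0" unfolding G_def by (simp add: fract_collapse)
  define N where "N = (\<Prod>c\<in>Fq q. sigma c G)"
  have sV: "sigma c G \<in> VV q" for c unfolding G_def sigma_iota by (rule VV_Fract)
  have NV: "N \<in> VV q" unfolding N_def by (rule VV_prod) (rule sV)
  have Ninv: "\<forall>d\<in>(Fq q :: 'a set). sigma d N = N"
  proof
    fix d :: 'a assume d: "d \<in> Fq q"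
    have "sigma d N = (\<Prod>c\<in>Fq q. sigma (c + d) G)"
      unfolding N_def rhom_prod[OF rhom_sigma] o_def sigma_comp ..
    also have "\<dots> = N" unfolding N_def by (rule Fq_reindex[OF fin]) (rule addc[OF d])
    finally show "sigma d N = N" .
  qed
  have NK: "N \<in> KK q" by (rule core[OF NV Ninv])
  have Nnz: "N \<noteq> 0" unfolding N_def using fin Gnz by (simp add: sigma_eq0)
  have N_split: "N = G * (\<Prod>c\<in>Fq q - {0}. sigma c G)"
    unfolding N_def using prod.remove[OF fin Fq_0, of "\<lambda>c. sigma c G"] by (simp add: sigma_0)
  have rG: "r * G = Fract f 1" unfolding fg(1) G_def using fg(2) by (simp add: eq_fract(1))
  have rNV: "r * N \<in> VV q"
    unfolding N_split mult.assoc[symmetric] rG by (intro VV_mult VV_Fract VV_prod sV)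
  have rNinv: "\<forall>d\<in>(Fq q :: 'a set). sigma d (r * N) = r * N"
    using inv Ninv by (simp add: rhom_mult[OF rhom_sigma])
  have "r * N \<in> KK q" by (rule core[OF rNV rNinv])
  then have "r * N / N \<in> KK q" using NK by (rule KK_closed(4))
  then show "r \<in> KK q" using Nnz by simp
qed

end




theorem lemma2p3:
  fixes p n q :: nat
  assumes "prime p" and "p > 2" and "n \<ge> 1" and "q = p ^ n"
    and "CHAR('a::field) = p"
    and "card (Fq q :: 'a set) = q"
  shows "(invariant_field q :: 'a ratfun3 set) = gen_field A0 (beta q) Delta"
proof -
  have q2: "q \<ge> 2"
  proof -
    have "p \<le> p ^ n" using assms(3) \<open>p > 2\<close> by (simp add: self_le_power)
    then show ?thesis using assms(2,4) by simp
  qed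
  have oddp: "odd p" using assms(1,2) by (metis prime_odd_nat)
  then have qodd: "odd q" using assms(4) by simp
  have fin: "finite (Fq q :: 'a set)" using assms(6) q2 by (intro card_ge_0_finite) simp
  have addc: "\<And>c d. c \<in> Fq q \<Longrightarrow> d \<in> Fq q \<Longrightarrow> d + c \<in> (Fq q :: 'a set)"
    using Fq_add[OF assms(1,5)] assms(4) by blast
  show ?thesis
  proof
    show "(invariant_field q :: 'a ratfun3 set) \<subseteq> gen_field A0 (beta q) Delta"
    proof -
      have "invariant_field q \<subseteq> (KK q :: 'a ratfun3 set)"
        by (rule inv_sub_gen) (rule fin, rule assms(6), rule q2, rule qodd, erule (1) addc)
      then show ?thesis unfolding KK_def .
    qed
    show "gen_field A0 (beta q) Delta \<subseteq> (invariant_field q :: 'a ratfun3 set)"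
      by (rule gen_sub_inv) (rule fin, erule (1) addc)
  qed
qed


end
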